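(* Let $r\geqslant 2$, $\ell\geqslant 1$ and $m=2^r(2^\ell+1)$. Then $\gcd(r,\ell)\leqslant 2$ if and only if, for every pair of distinct roots $\tau_i,\tau_j\in\overline{\mathbb F}_2$ of $(L_1(x^{m-1}))'$, one has $P_\ell(\tau_i+\tau_j)\neq 0$.
   Context: For $k\geqslant 1$, $P_k(x)=x+x^2+\dots+x^{2^{k-1}}$ is the $k$-th trace polynomial. For $m\equiv 0\pmod 4$, $L_1(x^{m-1})$ denotes the unique polynomial $Q$ of degree at most $(m-2)/2$ over $\mathbb F_2$ with $Q(x(x+1))=(x+1)^{m-1}+x^{m-1}$. *)

theory Defs
  imports "HOL-Algebra.Algebraic_Closure_Type" "HOL-Library.Z2"
begin

text \<open>The field F_2 is the type bit; its algebraic closure is bit alg_closure.\<close>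

definition trace_poly :: "nat \<Rightarrow> bit poly" where
  "trace_poly k = (\<Sum>i<k. monom 1 (2 ^ i))"

text \<open>L_1(x^(m-1)): the unique Q of degree at most (m-2)/2 with
  Q(x(x+1)) = (x+1)^(m-1) + x^(m-1).\<close>
definition L1 :: "nat \<Rightarrow> bit poly" where
  "L1 m = (THE Q. degree Q \<le> (m - 2) div 2 \<and>
      pcompose Q [:0, 1, 1:] = [:1, 1:] ^ (m - 1) + [:0, 1:] ^ (m - 1))"

end

theory Submission imports Defs begin

section \<open>Characteristic 2 algebra\<close>

lemma c2_add_self: fixes a :: "'a::comm_ring_1" assumes "(2::'a) = 0" shows "a + a = 0"
proof -
  have "a + a = 2 * a" by simp
  thus ?thesis using assms by simp
qed

lemma c2_neg: fixes a :: "'a::comm_ring_1" assumes "(2::'a) = 0" shows "- a = a"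
  using c2_add_self[OF assms, of a] by (simp add: add_eq_0_iff2 eq_neg_iff_add_eq_0)

lemma c2_diff: fixes a b :: "'a::comm_ring_1" assumes "(2::'a) = 0" shows "a - b = a + b"
  using c2_neg[OF assms, of b] by (metis diff_conv_add_uminus)

lemma c2_sq: fixes a b :: "'a::comm_ring_1" assumes "(2::'a) = 0" shows "(a + b)^2 = a^2 + b^2"
proof -
  have "(a + b)^2 = a^2 + b^2 + 2 * (a*b)" by (simp add: power2_eq_square algebra_simps)
  thus ?thesis using assms by simp
qed

lemma c2_pow2: fixes a b :: "'a::comm_ring_1" assumes "(2::'a) = 0"
  shows "(a + b)^(2^k) = a^(2^k) + b^(2^k)"
proof (induction k)
  case 0 then show ?case by simp
next
  case (Suc k)
  have "(a + b)^(2^Suc k) = ((a+b)^(2^k))^2" by (simp add: power_mult[symmetric] mult.commute)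
  also have "\<dots> = (a^(2^k))^2 + (b^(2^k))^2" using Suc c2_sq[OF assms] by simp
  also have "\<dots> = a^(2^Suc k) + b^(2^Suc k)" by (simp add: power_mult[symmetric] mult.commute)
  finally show ?case .
qed

lemma c2_sum_sq: fixes f :: "nat \<Rightarrow> 'a::comm_ring_1" assumes "(2::'a) = 0"
  shows "(\<Sum>i<k. f i)^2 = (\<Sum>i<k. (f i)^2)"
  by (induction k) (simp_all add: c2_sq[OF assms])

lemma c2_frobX: fixes x :: "'a::comm_ring_1" assumes "(2::'a) = 0"
  shows "x^(2^k) = x + (\<Sum>i<k. (x^2 + x)^(2^i))"
proof (induction k)
  case 0 then show ?case by simp
next
  case (Suc k)
  have "x^(2^Suc k) = (x^(2^k))^2" by (simp add: power_mult[symmetric] mult.commute)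
  also have "\<dots> = x^2 + (\<Sum>i<k. ((x^2 + x)^(2^i))^2)"
    using Suc by (simp add: c2_sq[OF assms] c2_sum_sq[OF assms])
  also have "(\<Sum>i<k. ((x^2 + x)^(2^i))^2) = (\<Sum>i<k. (x^2 + x)^(2^Suc i))"
    by (simp add: power_mult[symmetric] mult.commute)
  also have "x^2 + \<dots> = x + (\<Sum>i<Suc k. (x^2 + x)^(2^i))"
  proof -
    have "(\<Sum>i<Suc k. (x^2 + x)^(2^i)) = (x^2 + x) + (\<Sum>i<k. (x^2 + x)^(2^Suc i))"
      by (subst sum.lessThan_Suc_shift) simp
    hence "x + (\<Sum>i<Suc k. (x^2 + x)^(2^i)) = x^2 + (x + x) + (\<Sum>i<k. (x^2 + x)^(2^Suc i))"
      by (simp add: algebra_simps)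
    thus ?thesis using c2_add_self[OF assms, of x] by simp
  qed
  finally show ?case .
qed

lemma c2_key: fixes x a b :: "'a::comm_ring_1" assumes "(2::'a) = 0"
  shows "x*(x+1+a)*(x+1+b) + (x+1)*(x+a)*(x+b) = (x^2+x) + a*b"
proof -
  have "x*(x+1+a)*(x+1+b) + (x+1)*(x+a)*(x+b) = (x^2+x) + a*b
     + 2*(x*x*(x+1) + x*(x+1)*(a+b) + x*a*b)" by (simp add: algebra_simps power2_eq_square)
  thus ?thesis using assms by simp
qed

lemma c2_L1_identity: fixes x :: "'a::comm_ring_1" assumes two: "(2::'a) = 0"
  and m: "m = 2^r * (2^l + 1)"
  shows "(x^2+x) * (1 + (\<Sum>i<r. (x^2+x)^(2^i - 1)) * (\<Sum>i<r+l. (x^2+x)^(2^i)))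
       = (x^2+x) * ((x+1)^(m-1) + x^(m-1))"
proof -
  define y where "y = x^2 + x"
  define P where "P k = (\<Sum>i<k. y^(2^i))" for k
  have yA: "y * (\<Sum>i<r. y^(2^i - 1)) = P r"
    unfolding P_def sum_distrib_left
  proof (rule sum.cong[OF refl])
    fix i assume "i \<in> {..<r}"
    have "Suc (2^i - 1) = (2::nat)^i" by simp
    then show "y * y^(2^i - 1) = y^(2^i)" by (metis power_Suc)
  qed
  have fx: "x^(2^k) = x + P k" for k unfolding P_def y_def by (rule c2_frobX[OF two])
  have y1: "(x+1)^2 + (x+1) = y"
  proof -
    have "(x+1)^2 + (x+1) = x^2 + x + (1 + 1)" using c2_sq[OF two, of x 1] by (simp add: algebra_simps)
    thus ?thesis using c2_add_self[OF two, of 1] y_def by simp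
  qed
  have fx1: "(x+1)^(2^k) = (x+1) + P k" for k
    using c2_frobX[OF two, of "x+1" k] unfolding P_def y1 .
  have mm: "m = 2^r + 2^(r+l)" using m by (simp add: algebra_simps power_add)
  have m1: "m = Suc (m - 1)" using mm by simp
  have xm: "x^m = (x + P r) * (x + P (r+l))"
  proof -
    have "x^m = x^(2^r) * x^(2^(r+l))" by (subst mm) (rule power_add)
    thus ?thesis by (simp only: fx)
  qed
  have x1m: "(x+1)^m = (x + 1 + P r) * (x + 1 + P (r+l))"
  proof -
    have "(x+1)^m = (x+1)^(2^r) * (x+1)^(2^(r+l))" by (subst mm) (rule power_add)
    thus ?thesis by (simp only: fx1)
  qed
  have yx: "y = x * (x+1)" unfolding y_def by (simp add: power2_eq_square algebra_simps)
  have "y * ((x+1)^(m-1) + x^(m-1)) = x * ((x+1) * (x+1)^(m-1)) + (x+1) * (x * x^(m-1))"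
    unfolding yx by (simp add: algebra_simps)
  also have "\<dots> = x * (x+1)^m + (x+1) * x^m" using m1 by (metis power_Suc)
  also have "\<dots> = y + P r * P (r+l)" unfolding xm x1m y_def
    using c2_key[OF two, of x "P r" "P (r+l)"] by (simp add: algebra_simps)
  also have "\<dots> = y * (1 + (\<Sum>i<r. y^(2^i - 1)) * P (r+l))"
    using yA by (simp add: distrib_left mult.assoc[symmetric])
  finally show ?thesis unfolding P_def y_def by simp
qed

lemma two_bit_poly: "(2::bit poly) = 0"
  by (metis bit_2_eq_0 of_nat_numeral of_nat_poly pCons_0_0 smult_0_left smult_one)

lemma pcompose_monom1: "pcompose (monom 1 n) q = q^n"
  by (induction n) (simp_all add: monom_Suc pcompose_pCons pcompose_1)

lemma L1_spec:
  assumes r: "r \<ge> 1" and m: "m = 2^r * (2^l + 1)"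
  shows "pcompose (L1 m) [:0, 1, 1:] = [:1, 1:] ^ (m - 1) + [:0, 1:] ^ (m - 1)"
proof -
  define Xp :: "bit poly" where "Xp = [:0,1:]"
  have Y: "[:0, 1, 1:] = Xp^2 + Xp" unfolding Xp_def by (simp add: power2_eq_square)
  have Xp1: "[:1, 1:] = Xp + 1" unfolding Xp_def by (simp add: one_pCons)
  define Qd :: "bit poly" where "Qd = 1 + (\<Sum>i<r. monom 1 (2^i - 1)) * trace_poly (r+l)"
  have comp: "pcompose Qd [:0, 1, 1:] = 1 + (\<Sum>i<r. (Xp^2+Xp)^(2^i - 1)) * (\<Sum>i<r+l. (Xp^2+Xp)^(2^i))"
    unfolding Qd_def trace_poly_def
    by (simp add: pcompose_add pcompose_mult pcompose_sum pcompose_1 pcompose_monom1 Y)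
  have Ynz: "Xp^2 + Xp \<noteq> 0" unfolding Xp_def by (simp add: power2_eq_square)
  have eqQd: "pcompose Qd [:0, 1, 1:] = [:1, 1:] ^ (m - 1) + [:0, 1:] ^ (m - 1)"
  proof -
    have "1 + (\<Sum>i<r. (Xp^2+Xp)^(2^i - 1)) * (\<Sum>i<r+l. (Xp^2+Xp)^(2^i)) = (Xp+1)^(m-1) + Xp^(m-1)"
      using c2_L1_identity[OF two_bit_poly m, of Xp] Ynz by (metis mult_left_cancel)
    thus ?thesis by (subst comp) (simp only: Xp1 Xp_def)
  qed
  obtain r' where r': "r = Suc r'" using r by (cases r) auto
  have degA: "degree (\<Sum>i<r. monom (1::bit) (2^i - 1)) \<le> 2^r' - 1"
  proof (rule degree_sum_le)
    fix i assume "i \<in> {..<r}"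
    hence "i \<le> r'" using r' by simp
    hence "(2::nat)^i \<le> 2^r'" by simp
    thus "degree (monom (1::bit) (2^i - 1)) \<le> 2^r' - 1"
      using degree_monom_le[of "1::bit" "2^i - 1"] by linarith
  qed simp
  have degB: "degree (trace_poly (r+l)) \<le> 2^(r'+l)"
    unfolding trace_poly_def
  proof (rule degree_sum_le)
    fix i assume "i \<in> {..<r+l}"
    hence "i \<le> r'+l" using r' by simp
    hence "(2::nat)^i \<le> 2^(r'+l)" by simp
    thus "degree (monom (1::bit) (2^i)) \<le> 2^(r'+l)"
      using degree_monom_le[of "1::bit" "2^i"] by linarith
  qed simp
  have p1: "(1::nat) \<le> 2^r'" by simp
  have mdiv: "(m - 2) div 2 = 2^r' - 1 + 2^(r'+l)"
  proof -
    have "m = 2 * (2^r' + 2^(r'+l))" using m r' by (simp add: algebra_simps power_add)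
    hence "m - 2 = 2 * (2^r' - 1 + 2^(r'+l))" using p1 by simp
    thus ?thesis by simp
  qed
  have degQd: "degree Qd \<le> (m - 2) div 2"
  proof -
    have "degree ((\<Sum>i<r. monom (1::bit) (2^i - 1)) * trace_poly (r+l)) \<le> (2^r' - 1) + 2^(r'+l)"
      using degree_mult_le[of "\<Sum>i<r. monom (1::bit) (2^i - 1)" "trace_poly (r+l)"] degA degB by linarith
    thus ?thesis unfolding Qd_def mdiv by (rule degree_add_le[rotated]) simp
  qed
  have uniq: "Q = Qd" if "pcompose Q [:0, 1, 1:] = [:1, 1:] ^ (m - 1) + [:0, 1:] ^ (m - 1)" for Q :: "bit poly"
  proof -
    have "pcompose (Q - Qd) [:0, 1, 1:] = 0" using that eqQd by (simp add: pcompose_diff)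
    hence "Q - Qd = 0" by (rule pcompose_eq_0) simp
    thus ?thesis by simp
  qed
  have "L1 m = Qd"
    unfolding L1_def
  proof (rule the_equality)
    show "degree Qd \<le> (m - 2) div 2 \<and> pcompose Qd [:0, 1, 1:] = [:1, 1:] ^ (m - 1) + [:0, 1:] ^ (m - 1)"
      using degQd eqQd by (rule conjI)
  next
    fix Q :: "bit poly" assume "degree Q \<le> (m - 2) div 2 \<and> pcompose Q [:0, 1, 1:] = [:1, 1:] ^ (m - 1) + [:0, 1:] ^ (m - 1)"
    thus "Q = Qd" using uniq by blast
  qed
  thus ?thesis using eqQd by (simp only:)
qed

lemma of_nat_bit: "(of_nat n :: bit) = (if even n then 0 else 1)"
  by (induction n) auto

lemma L1_deriv:
  assumes r: "r \<ge> 1" and m: "m = 2^r * (2^l + 1)"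
  shows "pcompose (pderiv (L1 m)) [:0, 1, 1:] = [:1, 1:] ^ (m - 2) + [:0, 1:] ^ (m - 2)"
proof -
  have ev: "even m" using m r by (simp add: power_eq_if)
  have m2: "m \<ge> 2"
  proof -
    have "(2::nat)^1 \<le> 2^r" using r by (intro power_increasing) auto
    moreover have "(1::nat) \<le> 2^l + 1" by simp
    ultimately have "2^1 * 1 \<le> (2::nat)^r * (2^l+1)" by (intro mult_le_mono) auto
    thus ?thesis using m by simp
  qed
  have odd1: "(of_nat (m - 1) :: bit) = 1" using ev m2 by (simp add: of_nat_bit)
  have dY: "pderiv [:0, 1, 1:] = (1::bit poly)"
    by (simp add: pderiv_pCons one_pCons)
  have d1: "pderiv [:1, 1:] = (1::bit poly)" by (simp add: pderiv_pCons one_pCons)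
  have d0: "pderiv [:0, 1:] = (1::bit poly)" by (simp add: pderiv_pCons one_pCons)
  have "pderiv (pcompose (L1 m) [:0, 1, 1:]) = pcompose (pderiv (L1 m)) [:0, 1, 1:]"
    by (simp add: pderiv_pcompose dY)
  moreover have "pderiv (pcompose (L1 m) [:0, 1, 1:]) = [:1, 1:] ^ (m - 2) + [:0, 1:] ^ (m - 2)"
    unfolding L1_spec[OF r m] using odd1
    by (simp add: pderiv_add pderiv_power d1 d0 diff_diff_left numeral_2_eq_2)
  ultimately show ?thesis by simp
qed

type_synonym K = "bit alg_closure"

lemma two_K: "(2::K) = 0"
  by (metis to_ac_numeral bit_2_eq_0 to_ac_0)

lemma coeff_ma: "poly.coeff (map_poly (to_ac :: bit \<Rightarrow> K) p) n = to_ac (poly.coeff p n)"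
  by (rule coeff_map_poly) simp

lemma ma_add: "map_poly to_ac (p + q) = map_poly to_ac p + map_poly (to_ac :: bit \<Rightarrow> K) q"
  by (intro poly_eqI) (simp only: coeff_ma coeff_add to_ac_add)

lemma ma_mult: "map_poly to_ac (p * q) = map_poly to_ac p * map_poly (to_ac :: bit \<Rightarrow> K) q"
  by (intro poly_eqI) (simp only: coeff_ma coeff_mult to_ac_sum to_ac_mult)

lemma ma_power: "map_poly (to_ac :: bit \<Rightarrow> K) (p ^ n) = map_poly to_ac p ^ n"
  by (induction n) (simp_all add: ma_mult)

lemma ev_pCons: "poly (map_poly (to_ac :: bit \<Rightarrow> K) (pCons a p)) t = to_ac a + t * poly (map_poly to_ac p) t"
  by (simp add: map_poly_pCons)

lemma ev_pcompose: "poly (map_poly (to_ac :: bit \<Rightarrow> K) (pcompose p q)) t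
    = poly (map_poly to_ac p) (poly (map_poly to_ac q) t)"
proof (induction p)
  case 0 then show ?case by simp
next
  case (pCons a p)
  show ?case by (simp add: pcompose_pCons ma_add ma_mult pCons.IH ev_pCons map_poly_pCons)
qed

lemma ev_trace: "poly (map_poly (to_ac :: bit \<Rightarrow> K) (trace_poly l)) t = (\<Sum>i<l. t^(2^i))"
  by (induction l) (simp_all add: trace_poly_def ma_add map_poly_monom poly_monom)

lemma ev_L1:
  assumes r: "r \<ge> 1" and m: "m = 2^r * (2^l + 1)"
  shows "poly (map_poly (to_ac :: bit \<Rightarrow> K) (pderiv (L1 m))) (x^2 + x) = (x+1)^(m-2) + x^(m-2)"
proof -
  have "poly (map_poly (to_ac :: bit \<Rightarrow> K) (pcompose (pderiv (L1 m)) [:0, 1, 1:])) x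
     = poly (map_poly (to_ac :: bit \<Rightarrow> K) (pderiv (L1 m))) (x^2 + x)"
    by (simp add: ev_pcompose map_poly_pCons power2_eq_square algebra_simps)
  moreover have "poly (map_poly (to_ac :: bit \<Rightarrow> K) (pcompose (pderiv (L1 m)) [:0, 1, 1:])) x
     = (x+1)^(m-2) + x^(m-2)"
    unfolding L1_deriv[OF r m] by (simp add: ma_add ma_power map_poly_pCons algebra_simps)
  ultimately show ?thesis by simp
qed

section \<open>Frobenius in K\<close>

lemma K_add_self: "(a::K) + a = 0" by (rule c2_add_self[OF two_K])
lemma K_neg: "- (a::K) = a" by (rule c2_neg[OF two_K])
lemma K_add_eq0: "(a::K) + b = 0 \<longleftrightarrow> a = b"
  by (metis K_add_self add_diff_cancel_right' c2_diff[OF two_K] diff_self)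
lemma frob_add: "((a::K) + b)^(2^k) = a^(2^k) + b^(2^k)" by (rule c2_pow2[OF two_K])
lemma frob_inj: "(a::K)^(2^k) = b^(2^k) \<Longrightarrow> a = b"
proof -
  assume "a^(2^k) = b^(2^k)"
  hence "(a + b)^(2^k) = 0" by (simp add: frob_add K_add_self)
  thus "a = b" using K_add_eq0 by simp
qed
lemma sq_inj: "(a::K)^2 = b^2 \<Longrightarrow> a = b" using frob_inj[of a 1 b] by simp

lemma pow2_mult: "(a::K)^(2^(i+j)) = (a^(2^i))^(2^j)"
  by (simp add: power_add power_mult)

definition fixk :: "K \<Rightarrow> nat \<Rightarrow> bool" where "fixk a k \<longleftrightarrow> a^(2^k) = a"

lemma fixk_add: "fixk a i \<Longrightarrow> fixk a j \<Longrightarrow> fixk a (i+j)"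
  unfolding fixk_def by (simp add: pow2_mult)
lemma fixk_mult: "fixk a i \<Longrightarrow> fixk a (i*k)"
proof (induction k)
  case 0 then show ?case by (simp add: fixk_def)
next
  case (Suc k) then show ?case using fixk_add[of a i "i*k"] by simp
qed
lemma fixk_sub: "fixk a i \<Longrightarrow> fixk a (i+j) \<Longrightarrow> fixk a j"
  unfolding fixk_def
proof -
  assume a: "a^(2^i) = a" and b: "a^(2^(i+j)) = a"
  have "(a^(2^j))^(2^i) = a^(2^i)" using b a by (metis add.commute pow2_mult)
  thus "a^(2^j) = a" by (rule frob_inj)
qed
lemma fixk_0: "fixk a 0" unfolding fixk_def by simp
lemma fixk_gcd: "fixk a r \<Longrightarrow> fixk a l \<Longrightarrow> fixk a (gcd r l)"
proof (induction r l rule: gcd_nat_induct)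
  case (step m n)
  have "fixk a (n * (m div n))" using step(4) by (rule fixk_mult)
  moreover have "m = n * (m div n) + m mod n" by simp
  ultimately have "fixk a (m mod n)" using step(3) fixk_sub by metis
  thus ?case using step by (simp add: gcd_non_0_nat)
qed simp
lemma fixk_dvd: "g dvd r \<Longrightarrow> fixk a g \<Longrightarrow> fixk a r"
  by (auto elim!: dvdE intro: fixk_mult)

lemma F4_eq: assumes "(x::K)^4 = x" "x \<noteq> 0" "x \<noteq> 1" shows "x^2 + x + 1 = 0"
proof -
  have "x * (x + 1) * (x^2 + x + 1) = x^4 + x + 2 * (x^3 + x^2)"
    by (simp add: algebra_simps power2_eq_square power3_eq_cube power4_eq_xxxx)
  also have "\<dots> = 0" using assms(1) by (simp add: two_K K_add_self)
  finally have "x * (x + 1) * (x^2 + x + 1) = 0" .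
  moreover have "x + 1 \<noteq> 0" using assms(3) K_add_eq0 by simp
  ultimately show ?thesis using assms(2) by simp
qed

lemma root_char:
  assumes r: "r \<ge> 1" and l: "l \<ge> 1" and m: "m = 2^r * (2^l + 1)"
  shows "(x+1)^(m-2) + x^(m-2) = 0 \<longleftrightarrow> x \<noteq> 0 \<and> x \<noteq> 1 \<and>
     x * x^(2^(r-1)) + x * (x^(2^(r-1)))^(2^l) + x + x^(2^(r-1)) * (x^(2^(r-1)))^(2^l) = (0::K)"
proof -
  obtain r' where r': "r = Suc r'" using r by (cases r) auto
  define q :: nat where "q = 2^r'"
  define Qn :: nat where "Qn = 2^l"
  define z where "z = x^q"
  define u where "u = z^Qn"
  have rq: "2^(r-1) = q" unfolding q_def r' by simp
  have Qn2: "Qn \<ge> 2"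
  proof -
    have "(2::nat)^1 \<le> 2^l" using l by (intro power_increasing) auto
    thus ?thesis unfolding Qn_def by simp
  qed
  have mq: "m = 2*(q*Qn) + 2*q" unfolding m q_def Qn_def r' by (simp add: algebra_simps)
  have q1: "q \<ge> 1" unfolding q_def by simp
  have qQ: "q*Qn \<ge> 1*2" using mult_le_mono[OF q1 Qn2] .
  have m2: "m - 2 \<noteq> 0" using mq qQ q1 by linarith
  have mm: "m = (m - 2) + 2" using mq q1 by simp
  have xm: "x^m = (z*u)^2"
  proof -
    have a: "((x^q)^Qn)^2 = x^(2*(q*Qn))" by (simp only: power_mult[symmetric] mult.commute[of 2 "q*Qn"])
    have b: "(x^q)^2 = x^(2*q)" by (simp only: power_mult[symmetric] mult.commute[of 2 q])
    have "x^m = ((x^q)^Qn)^2 * (x^q)^2" unfolding mq a b by (rule power_add)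
    thus ?thesis unfolding u_def z_def by (simp add: power_mult_distrib)
  qed
  have x1q: "(x+1)^q = z + 1" unfolding q_def z_def using frob_add[of x 1 r'] by simp
  have x1Q: "(z+1)^Qn = u + 1" unfolding Qn_def u_def using frob_add[of z 1 l] by simp
  have x1m: "(x+1)^m = ((z+1)*(u+1))^2"
  proof -
    have a: "(((x+1)^q)^Qn)^2 = (x+1)^(2*(q*Qn))" by (simp only: power_mult[symmetric] mult.commute[of 2 "q*Qn"])
    have b: "((x+1)^q)^2 = (x+1)^(2*q)" by (simp only: power_mult[symmetric] mult.commute[of 2 q])
    have "(x+1)^m = (((x+1)^q)^Qn)^2 * ((x+1)^q)^2" unfolding mq a b by (rule power_add)
    thus ?thesis unfolding x1q x1Q by (simp add: power_mult_distrib)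
  qed
  have E: "x*(z+1)*(u+1) + (x+1)*(z*u) = x*z + x*u + x + z*u"
  proof -
    have "x*(z+1)*(u+1) + (x+1)*(z*u) = x*z + x*u + x + z*u + 2*(x*z*u)" by (simp add: algebra_simps)
    thus ?thesis by (simp add: two_K)
  qed
  show ?thesis
  proof (cases "x = 0 \<or> x = 1")
    case True
    then show ?thesis
    proof
      assume "x = 0" thus ?thesis using m2 by (simp add: zero_power)
    next
      assume x1: "x = 1"
      have "(x+1)^(m-2) = 0" unfolding x1 using m2 by (simp add: one_add_one two_K)
      thus ?thesis using x1 by (simp add: zero_power)
    qed
  next
    case False
    hence x0: "x \<noteq> 0" and x1: "x + 1 \<noteq> 0" using K_add_eq0 by auto
    have "(x+1)^(m-2) + x^(m-2) = 0 \<longleftrightarrow> (x+1)^(m-2) = x^(m-2)" by (rule K_add_eq0)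
    also have "\<dots> \<longleftrightarrow> x^2 * (x+1)^m = (x+1)^2 * x^m"
    proof
      assume h: "(x+1)^(m-2) = x^(m-2)"
      have "x^2 * (x+1)^m = x^2 * ((x+1)^(m-2) * (x+1)^2)" by (subst mm) (simp only: power_add)
      also have "\<dots> = (x+1)^2 * (x^(m-2) * x^2)" unfolding h by (simp only: mult_ac)
      also have "\<dots> = (x+1)^2 * x^m" by (subst (2) mm) (simp only: power_add)
      finally show "x^2 * (x+1)^m = (x+1)^2 * x^m" .
    next
      assume "x^2 * (x+1)^m = (x+1)^2 * x^m"
      moreover have "x^2 * (x+1)^m = (x^2 * (x+1)^2) * (x+1)^(m-2)" by (subst mm) (simp only: power_add mult_ac)
      moreover have "(x+1)^2 * x^m = (x^2 * (x+1)^2) * x^(m-2)" by (subst mm) (simp only: power_add mult_ac)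
      ultimately have "(x^2 * (x+1)^2) * (x+1)^(m-2) = (x^2 * (x+1)^2) * x^(m-2)" by simp
      moreover have "x^2 * (x+1)^2 \<noteq> 0" using x0 x1 by simp
      ultimately show "(x+1)^(m-2) = x^(m-2)" by simp
    qed
    also have "\<dots> \<longleftrightarrow> (x*((z+1)*(u+1)))^2 = ((x+1)*(z*u))^2"
      unfolding xm x1m by (simp add: power_mult_distrib)
    also have "\<dots> \<longleftrightarrow> x*((z+1)*(u+1)) = (x+1)*(z*u)" using sq_inj by auto
    also have "\<dots> \<longleftrightarrow> x*(z+1)*(u+1) + (x+1)*(z*u) = 0" using K_add_eq0 by (simp add: mult.assoc)
    also have "\<dots> \<longleftrightarrow> x*z + x*u + x + z*u = 0" unfolding E ..
    finally show ?thesis using False unfolding u_def z_def rq Qn_def by simp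
  qed
qed

lemma no_pair:
  fixes x y :: K
  assumes r: "r \<ge> 1" and l: "l \<ge> 1" and g: "gcd r l \<le> 2"
    and Ex: "x * x^(2^(r-1)) + x * (x^(2^(r-1)))^(2^l) + x + x^(2^(r-1)) * (x^(2^(r-1)))^(2^l) = 0"
    and x0: "x \<noteq> 0" and x1: "x \<noteq> 1"
    and Ey: "y * y^(2^(r-1)) + y * (y^(2^(r-1)))^(2^l) + y + y^(2^(r-1)) * (y^(2^(r-1)))^(2^l) = 0"
    and y0: "y \<noteq> 0" and y1: "y \<noteq> 1"
    and w2: "(x+y)^2 + (x+y) \<noteq> 0" and wQ: "(x+y)^(2^l) = x+y"
  shows False
proof -
  obtain r' where r': "r = Suc r'" using r by (cases r) auto
  define q :: nat where "q = 2^r'"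
  define Qn :: nat where "Qn = 2^l"
  have rq: "2^(r-1) = q" unfolding q_def r' by simp
  define w where "w = x + y"
  have yw: "y = x + w" unfolding w_def by (simp add: add.assoc[symmetric] K_add_self)
  define z where "z = x^q"
  define u where "u = z^Qn"
  define c where "c = w^q"
  have wQ': "w^Qn = w" using wQ unfolding w_def Qn_def .
  have yq: "y^q = z + c" unfolding yw z_def c_def q_def by (rule frob_add)
  have cQ: "c^Qn = c"
  proof -
    have "c^Qn = (w^Qn)^q" unfolding c_def by (simp only: power_mult[symmetric] mult.commute)
    thus ?thesis unfolding wQ' c_def .
  qed
  have yu: "(y^q)^Qn = u + c" unfolding yq Qn_def u_def using frob_add[of z c l] cQ Qn_def by simp
  have Ex': "x*z + x*u + x + z*u = 0" using Ex unfolding rq z_def u_def Qn_def .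
  have Ey': "(x+w)*(z+c) + (x+w)*(u+c) + (x+w) + (z+c)*(u+c) = 0"
    using Ey unfolding rq Qn_def[symmetric] unfolding yu unfolding yq unfolding yw[symmetric] .
  have "((x+w)*(z+c) + (x+w)*(u+c) + (x+w) + (z+c)*(u+c)) + (x*z + x*u + x + z*u)
      = ((w+c)*(z+u) + (w + c^2)) + 2*(x*z+x*u+x+z*u+x*c+w*c)"
    by (simp add: algebra_simps power2_eq_square)
  hence sum: "(w+c)*(z+u) + (w + c^2) = 0" using Ex' Ey' by (simp add: two_K)
  have wc: "w + c \<noteq> 0"
  proof
    assume "w + c = 0"
    hence "c = w" using K_add_eq0 by simp
    hence "w^2 + w = 0" using sum \<open>w + c = 0\<close> by (simp add: add.commute two_K)
    thus False using w2 unfolding w_def by simp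
  qed
  define d where "d = w + c"
  define k where "k = z + u"
  have dk: "d * k = w + c^2" using sum K_add_eq0 unfolding d_def k_def by blast
  hence kdef: "k = (w + c^2) / d" using wc unfolding d_def by (simp add: field_simps)
  have dQ: "d^Qn = d" unfolding d_def Qn_def using frob_add[of w c l] wQ' cQ Qn_def by simp
  have nQ: "(w + c^2)^Qn = w + c^2"
  proof -
    have "(c^2)^Qn = (c^Qn)^2" by (simp only: power_mult[symmetric] mult.commute)
    thus ?thesis unfolding Qn_def using frob_add[of w "c^2" l] wQ' cQ Qn_def by simp
  qed
  have kQ: "k^Qn = k" unfolding kdef by (simp add: power_divide nQ dQ)
  have uk: "u = z + k" unfolding k_def by (simp add: add.assoc[symmetric] K_add_self)
  have uQ: "u^Qn = z"
  proof -
    have "u^Qn = z^Qn + k^Qn" unfolding uk Qn_def by (rule frob_add)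
    also have "\<dots> = u + k" unfolding kQ u_def ..
    also have "\<dots> = z" unfolding k_def by (simp add: add.commute add.left_commute K_add_self two_K)
    finally show ?thesis .
  qed
  have xk: "x * (k+1) = z*u"
  proof -
    have "x * (k+1) + z*u = 0" using Ex' unfolding k_def by (simp add: algebra_simps)
    thus ?thesis using K_add_eq0 by simp
  qed
  have k1: "k + 1 \<noteq> 0"
  proof
    assume "k + 1 = 0"
    hence "z*u = 0" using xk by simp
    hence "z = 0" unfolding u_def by auto
    thus False using x0 unfolding z_def by simp
  qed
  have xdef: "x = z*u / (k+1)" using xk k1 by (simp add: field_simps)
  have xQ: "x^Qn = x"
  proof -
    have "(k+1)^Qn = k + 1" unfolding Qn_def using frob_add[of k 1 l] kQ Qn_def by simp
    moreover have "(z*u)^Qn = z*u" using uQ unfolding power_mult_distrib u_def by (simp add: mult.commute)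
    ultimately show ?thesis by (subst (1 2) xdef) (simp add: power_divide)
  qed
  have uz: "u = z"
  proof -
    have "u = (x^Qn)^q" unfolding u_def z_def by (simp only: power_mult[symmetric] mult.commute)
    thus ?thesis unfolding xQ z_def .
  qed
  have k0: "k = 0" unfolding k_def uz by (rule K_add_self)
  have wr: "fixk w r"
  proof -
    have "w = c^2" using dk k0 K_add_eq0 by simp
    also have "c^2 = w^(2^r)" unfolding c_def q_def r' by (simp only: power_mult[symmetric] power_Suc mult.commute)
    finally show ?thesis unfolding fixk_def by simp
  qed
  have xr: "fixk x r"
  proof -
    have "x + z^2 = 0" using Ex' unfolding uz by (simp add: K_add_self power2_eq_square)
    hence "x = z^2" using K_add_eq0 by simp
    also have "z^2 = x^(2^r)" unfolding z_def q_def r' by (simp only: power_mult[symmetric] power_Suc mult.commute)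
    finally show ?thesis unfolding fixk_def by simp
  qed
  have xl: "fixk x l" using xQ unfolding fixk_def Qn_def .
  have wl: "fixk w l" using wQ' unfolding fixk_def Qn_def .
  have gd: "gcd r l dvd 2"
  proof -
    have "gcd r l \<noteq> 0" using l by simp
    hence "gcd r l = 1 \<or> gcd r l = 2" using g by linarith
    thus ?thesis by auto
  qed
  have x4: "x^4 = x" using fixk_dvd[OF gd fixk_gcd[OF xr xl]] unfolding fixk_def by simp
  have w4: "w^4 = w" using fixk_dvd[OF gd fixk_gcd[OF wr wl]] unfolding fixk_def by simp
  have y4: "y^4 = y" unfolding yw using frob_add[of x w 2] x4 w4 by simp
  have fx: "x^2 + x + 1 = 0" by (rule F4_eq[OF x4 x0 x1])
  have fy: "y^2 + y + 1 = 0" by (rule F4_eq[OF y4 y0 y1])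
  have "(x+y)^2 + (x+y) = (x^2 + x + 1) + (y^2 + y + 1) + 2 * (x*y - 1)"
    by (simp add: algebra_simps power2_eq_square)
  also have "\<dots> = 0" using fx fy by (simp add: two_K)
  finally show False using w2 by simp
qed

lemma big_field_elem:
  assumes g: "g \<ge> 3"
  shows "\<exists>a::K. a^(2^g) = a \<and> a^4 \<noteq> a"
proof (rule ccontr)
  assume "\<not> ?thesis"
  hence all: "\<And>a::K. a^(2^g) = a \<Longrightarrow> a^4 = a" by blast
  define N :: nat where "N = 2^g"
  have N8: "N \<ge> 8"
  proof -
    have "(2::nat)^3 \<le> 2^g" using g by (intro power_increasing) auto
    thus ?thesis unfolding N_def by simp
  qed
  define f :: "K poly" where "f = monom 1 N + [:0, 1:]"
  have degf: "degree f = N" unfolding f_def using N8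
    by (subst degree_add_eq_left) (auto simp: degree_monom_eq)
  have cN: "poly.coeff f N = 1"
  proof -
    have "N = Suc (Suc (N - 2))" using N8 by simp
    then obtain N' where "N = Suc (Suc N')" by blast
    thus ?thesis unfolding f_def by (simp add: coeff_pCons)
  qed
  have lcf: "lead_coeff f = 1" using cN degf by simp
  have fnz: "f \<noteq> 0" using degf N8 by auto
  have polyf: "poly f a = 0 \<longleftrightarrow> a^(2^g) = a" for a
    unfolding f_def N_def by (simp add: poly_monom K_add_eq0)
  have ofN: "(of_nat N :: K) = 0" unfolding N_def using g by (simp add: two_K)
  have df: "pderiv f = 1" unfolding f_def by (simp add: pderiv_add pderiv_monom ofN pderiv_pCons)
  obtain A where sA: "size A = N" and fA: "f = smult 1 (\<Prod>x\<in>#A. [:-x, 1:])"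
    using alg_closed_imp_factorization[OF fnz] degf lcf by metis
  have fA': "f = (\<Prod>x\<in>#A. [:-x, 1:])" using fA by simp
  have cnt: "count A a \<le> 1" for a
  proof (rule ccontr)
    assume "\<not> count A a \<le> 1"
    hence "a \<in># A" by (metis not_in_iff not_le zero_le)
    then obtain A1 where A1: "A = add_mset a A1" using multi_member_split by metis
    hence "a \<in># A1" using \<open>\<not> count A a \<le> 1\<close> by (simp add: not_in_iff)
    then obtain B where B: "A1 = add_mset a B" using multi_member_split by metis
    have "f = [:-a, 1:] * ([:-a, 1:] * (\<Prod>x\<in>#B. [:-x, 1:]))" unfolding fA' A1 B by simp
    moreover have La: "poly [:-a, 1:] a = 0" by simp
    ultimately have "poly (pderiv f) a = 0" by (simp only: pderiv_mult poly_add poly_mult La mult_zero_left mult_zero_right add_0)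
    thus False using df by simp
  qed
  have Aeq: "A = mset_set (set_mset A)"
    by (rule multiset_eqI) (use cnt in \<open>auto simp: count_mset_set' not_in_iff intro: le_antisym\<close>)
  have cardA: "card (set_mset A) = N" using sA by (metis Aeq size_mset_set)
  define h :: "K poly" where "h = monom 1 4 + [:0, 1:]"
  have degh: "degree h = 4" unfolding h_def
    by (subst degree_add_eq_left) (auto simp: degree_monom_eq)
  have hnz: "h \<noteq> 0" using degh by auto
  have sub: "set_mset A \<subseteq> {x. poly h x = 0}"
  proof
    fix a assume "a \<in># A"
    then obtain A1 where A1: "A = add_mset a A1" using multi_member_split by metis
    have "poly f a = 0" unfolding fA' A1 by simp
    hence "a^(2^g) = a" using polyf by simp
    hence "a^4 = a" by (rule all)
    thus "a \<in> {x. poly h x = 0}" unfolding h_def by (simp add: poly_monom K_add_eq0)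
  qed
  have "card (set_mset A) \<le> card {x. poly h x = 0}"
    by (rule card_mono[OF poly_roots_finite[OF hnz] sub])
  also have "\<dots> \<le> 4" using card_poly_roots_bound[OF hnz] degh by simp
  finally show False using cardA N8 by simp
qed

lemma K_surj: "\<exists>x::K. x^2 + x = t"
proof -
  have "degree [:t, 1, 1:] > 0" by simp
  then obtain x :: K where "poly [:t, 1, 1:] x = 0" using alg_closed_imp_poly_has_root by blast
  hence "t + (x^2 + x) = 0" by (simp add: algebra_simps power2_eq_square)
  hence "x^2 + x = t" using K_add_eq0 by (metis add.commute)
  thus ?thesis by blast
qed

lemma trace_sq: "(\<Sum>i<l. ((w::K)^2 + w)^(2^i)) = w^(2^l) + w"
proof -
  have "w^(2^l) = w + (\<Sum>i<l. (w^2 + w)^(2^i))" by (rule c2_frobX[OF two_K])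
  thus ?thesis by (simp add: add.assoc[symmetric] K_add_self two_K)
qed

lemma fix_root:
  fixes b :: K
  assumes r: "r \<ge> 1" and br: "fixk b r" and bl: "fixk b l"
  shows "b * b^(2^(r-1)) + b * (b^(2^(r-1)))^(2^l) + b + b^(2^(r-1)) * (b^(2^(r-1)))^(2^l) = 0"
proof -
  have u: "(b^(2^(r-1)))^(2^l) = b^(2^(r-1))"
  proof -
    have "(b^(2^(r-1)))^(2^l) = (b^(2^l))^(2^(r-1))" by (simp only: power_mult[symmetric] mult.commute)
    thus ?thesis using bl unfolding fixk_def by simp
  qed
  have z2: "(b^(2^(r-1)))^2 = b"
  proof -
    have "(b^(2^(r-1)))^2 = b^(2^(r-1) * 2)" by (simp only: power_mult)
    also have "2^(r-1) * 2 = (2::nat)^r" using r by (cases r) auto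
    finally show ?thesis using br unfolding fixk_def by simp
  qed
  show ?thesis unfolding u using z2 by (simp add: K_add_self power2_eq_square)
qed

lemma fixk_sq: "fixk b k \<Longrightarrow> fixk (b^2) k"
proof -
  assume "fixk b k"
  moreover have "(b^2)^(2^k) = (b^(2^k))^2" by (simp only: power_mult[symmetric] mult.commute)
  ultimately show ?thesis unfolding fixk_def by simp
qed

theorem proposition3p4:
  fixes r l m :: nat
  assumes "r \<ge> 2" and "l \<ge> 1" and "m = 2 ^ r * (2 ^ l + 1)"
  shows "gcd r l \<le> 2 \<longleftrightarrow>
    (\<forall>ti tj :: bit alg_closure.
       poly (map_poly to_ac (pderiv (L1 m))) ti = 0 \<longrightarrow>
       poly (map_poly to_ac (pderiv (L1 m))) tj = 0 \<longrightarrow>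
       ti \<noteq> tj \<longrightarrow>
       poly (map_poly to_ac (trace_poly l)) (ti + tj) \<noteq> 0)"
proof -
  have r1: "r \<ge> 1" using assms(1) by simp
  note l1 = assms(2)
  note m = assms(3)
  define E where "E b = b * b^(2^(r-1)) + b * (b^(2^(r-1)))^(2^l) + b + b^(2^(r-1)) * (b^(2^(r-1)))^(2^l)" for b :: K
  have Froot: "poly (map_poly to_ac (pderiv (L1 m))) (x^2 + x) = 0 \<longleftrightarrow> x \<noteq> 0 \<and> x \<noteq> 1 \<and> E x = 0" for x :: K
    unfolding ev_L1[OF r1 m] E_def by (rule root_char[OF r1 l1 m])
  have tsum: "(xi^2 + xi) + (xj^2 + xj) = (xi + xj)^2 + (xi + xj)" for xi xj :: K
    by (simp add: c2_sq[OF two_K] algebra_simps)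
  have Tr: "poly (map_poly to_ac (trace_poly l)) ((xi^2 + xi) + (xj^2 + xj)) = (xi+xj)^(2^l) + (xi+xj)" for xi xj :: K
    unfolding ev_trace tsum by (rule trace_sq)
  show ?thesis
  proof
    assume g: "gcd r l \<le> 2"
    show "\<forall>ti tj :: K. poly (map_poly to_ac (pderiv (L1 m))) ti = 0 \<longrightarrow>
       poly (map_poly to_ac (pderiv (L1 m))) tj = 0 \<longrightarrow> ti \<noteq> tj \<longrightarrow>
       poly (map_poly to_ac (trace_poly l)) (ti + tj) \<noteq> 0"
    proof (intro allI impI notI)
      fix ti tj :: K
      assume ri: "poly (map_poly to_ac (pderiv (L1 m))) ti = 0"
        and rj: "poly (map_poly to_ac (pderiv (L1 m))) tj = 0"
        and ne: "ti \<noteq> tj" and tr: "poly (map_poly to_ac (trace_poly l)) (ti + tj) = 0"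
      obtain xi where xi: "xi^2 + xi = ti" using K_surj by blast
      obtain xj where xj: "xj^2 + xj = tj" using K_surj by blast
      have Ri: "xi \<noteq> 0 \<and> xi \<noteq> 1 \<and> E xi = 0" using Froot ri xi by blast
      have Rj: "xj \<noteq> 0 \<and> xj \<noteq> 1 \<and> E xj = 0" using Froot rj xj by blast
      have w2: "(xi + xj)^2 + (xi + xj) \<noteq> 0"
        using ne K_add_eq0[of ti tj] tsum[of xi xj] xi xj by simp
      have wQ: "(xi + xj)^(2^l) = xi + xj"
        using tr Tr[of xi xj] xi xj K_add_eq0 by simp
      show False
        using no_pair[OF r1 l1 g _ _ _ _ _ _ w2 wQ] Ri Rj unfolding E_def by blast
    qed
  next
    assume H: "\<forall>ti tj :: K. poly (map_poly to_ac (pderiv (L1 m))) ti = 0 \<longrightarrow>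
       poly (map_poly to_ac (pderiv (L1 m))) tj = 0 \<longrightarrow> ti \<noteq> tj \<longrightarrow>
       poly (map_poly to_ac (trace_poly l)) (ti + tj) \<noteq> 0"
    show "gcd r l \<le> 2"
    proof (rule ccontr)
      assume "\<not> gcd r l \<le> 2"
      hence g3: "gcd r l \<ge> 3" by simp
      obtain a :: K where ag: "a^(2^gcd r l) = a" and a4: "a^4 \<noteq> a"
        using big_field_elem[OF g3] by blast
      have fa: "fixk a (gcd r l)" using ag unfolding fixk_def .
      have ar: "fixk a r" by (rule fixk_dvd[OF _ fa]) simp
      have al: "fixk a l" by (rule fixk_dvd[OF _ fa]) simp
      have a0: "a \<noteq> 0" using a4 by auto
      have a1: "a \<noteq> 1" using a4 by auto
      have b0: "a^2 \<noteq> 0" using a0 by simp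
      have b1: "a^2 \<noteq> 1" using a1 sq_inj[of a 1] by auto
      have Ea: "E a = 0" unfolding E_def by (rule fix_root[OF r1 ar al])
      have Eb: "E (a^2) = 0" unfolding E_def by (rule fix_root[OF r1 fixk_sq[OF ar] fixk_sq[OF al]])
      have ri: "poly (map_poly to_ac (pderiv (L1 m))) (a^2 + a) = 0" using Froot a0 a1 Ea by blast
      have rj: "poly (map_poly to_ac (pderiv (L1 m))) ((a^2)^2 + a^2) = 0" using Froot b0 b1 Eb by blast
      have a4': "(a^2)^2 = a^4" by simp
      have ne: "a^2 + a \<noteq> (a^2)^2 + a^2"
      proof
        assume "a^2 + a = (a^2)^2 + a^2"
        hence "a^2 + a + ((a^2)^2 + a^2) = 0" using K_add_eq0 by blast
        hence "a + a^4 = 0" unfolding a4' by (simp add: algebra_simps K_add_self two_K)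
        thus False using a4 K_add_eq0 by metis
      qed
      have wQ: "(a + a^2)^(2^l) = a + a^2"
        using frob_add[of a "a^2" l] al fixk_sq[OF al] unfolding fixk_def by simp
      have "poly (map_poly to_ac (trace_poly l)) ((a^2 + a) + ((a^2)^2 + a^2)) = 0"
        unfolding Tr wQ by (rule K_add_self)
      thus False using H ri rj ne by blast
    qed
  qed
qed

end
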